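(* Let $\mathsf{B}$ be a partition of $\mathcal{P}([n])$ into branches of the form $\mathcal{B}=\mathcal{C}(I,E)$ with $I,E\subseteq[n]$ disjoint, and suppose for each $\mathcal{B}\in\mathsf{B}$ real numbers $\underline{v}_{\mathcal{B}}\le\overline{v}_{\mathcal{B}}$ satisfy $\underline{v}_{\mathcal{B}}\le v(S)\le\overline{v}_{\mathcal{B}}$ for all $S\in\mathcal{B}$. For $i\in[n]$ let $\mathsf{B}_{+i}:=\{\mathcal{C}(I,E)\in\mathsf{B}: i\in I\}$, $\mathsf{B}_{-i}:=\{\mathcal{C}(I,E)\in\mathsf{B}: i\in E\}$, and $\mathsf{B}_{\pm i}:=\mathsf{B}\setminus(\mathsf{B}_{+i}\cup\mathsf{B}_{-i})$. For $\mathcal{B}=\mathcal{C}(I,E)$ with $r:=|I|$, $s:=|I|+|E|$, put $\Lambda_{\mathcal{B}}:=\frac{1}{(s+1)\binom{s}{r}}$, $\Lambda^-_{\mathcal{B}}:=\Lambda_{\mathcal{B}}\frac{s+1}{r}$ (for $r\ge1$) and $\Lambda^+_{\mathcal{B}}:=\Lambda_{\mathcal{B}}\frac{s+1}{s-r}$ (for $s>r$). Then for every $i\in[n]$, $$\sum_{\mathcal{B}\in\mathsf{B}_{+i}}\Lambda^-_{\mathcal{B}}\underline{v}_{\mathcal{B}}+\sum_{\mathcal{B}\in\mathsf{B}_{\pm i}}\Lambda_{\mathcal{B}}(\underline{v}_{\mathcal{B}}-\overline{v}_{\mathcal{B}})-\sum_{\mathcal{B}\in\mathsf{B}_{-i}}\Lambda^+_{\mathcal{B}}\overline{v}_{\mathcal{B}}\;\le\;\varphi_i\;\le\;\sum_{\mathcal{B}\in\mathsf{B}_{+i}}\Lambda^-_{\mathcal{B}}\overline{v}_{\mathcal{B}}+\sum_{\mathcal{B}\in\mathsf{B}_{\pm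 i}}\Lambda_{\mathcal{B}}(\overline{v}_{\mathcal{B}}-\underline{v}_{\mathcal{B}})-\sum_{\mathcal{B}\in\mathsf{B}_{-i}}\Lambda^+_{\mathcal{B}}\underline{v}_{\mathcal{B}}.$$
   Context: Let $f:\mathbb{R}^n\to\mathbb{R}$, $\mathbf{x}\in\mathbb{R}^n$, $\mathcal{D}$ a distribution on $\mathbb{R}^n$, and $v(S):=\mathbb{E}_{\mathbf{z}\sim\mathcal{D}}[f(\mathbf{x}_S;\mathbf{z}_{\bar S})]$ for $S\subseteq[n]$, where $(\mathbf{x}_S;\mathbf{z}_{\bar S})_j=x_j$ if $j\in S$ and $z_j$ otherwise. $\omega(k):=\frac1n\binom{n-1}{k}^{-1}$, $\Delta_i(S):=v(S\cup\{i\})-v(S)$, $\varphi_i:=\sum_{S\subseteq[n]\setminus\{i\}}\omega(|S|)\Delta_i(S)$. For disjoint $I,E\subseteq[n]$, $\mathcal{C}(I,E):=\{S\subseteq[n]: I\subseteq S,\ E\cap S=\emptyset\}$. *)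

theory Defs
  imports "HOL-Analysis.Analysis" "HOL-Probability.Probability"
begin

text \<open>Coordinates are indexed by a finite type 'n, so [n] = UNIV :: 'n set and n = CARD('n).\<close>

definition mix :: "real^'n \<Rightarrow> 'n set \<Rightarrow> real^'n \<Rightarrow> real^'n" where
  "mix x S z = (\<chi> j. if j \<in> S then x $ j else z $ j)"

definition game_val :: "(real^'n \<Rightarrow> real) \<Rightarrow> real^'n \<Rightarrow> (real^'n) measure \<Rightarrow> 'n set \<Rightarrow> real" where
  "game_val f x D S = (\<integral>z. f (mix x S z) \<partial>D)"

definition shap_weight :: "nat \<Rightarrow> nat \<Rightarrow> real" where
  "shap_weight n k = 1 / (real n * real ((n - 1) choose k))"

definition shapley :: "('n::finite set \<Rightarrow> real) \<Rightarrow> 'n \<Rightarrow> real" where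
  "shapley v i = (\<Sum>S \<in> {S. S \<subseteq> UNIV - {i}}. shap_weight CARD('n) (card S) * (v (insert i S) - v S))"

definition branch :: "'n set \<Rightarrow> 'n set \<Rightarrow> 'n set set" where
  "branch I E = {S. I \<subseteq> S \<and> E \<inter> S = {}}"

definition Lam :: "'n set \<Rightarrow> 'n set \<Rightarrow> real" where
  "Lam I E = 1 / (real (card I + card E + 1) * real ((card I + card E) choose card I))"

definition Lam_minus :: "'n set \<Rightarrow> 'n set \<Rightarrow> real" where
  "Lam_minus I E = Lam I E * real (card I + card E + 1) / real (card I)"

definition Lam_plus :: "'n set \<Rightarrow> 'n set \<Rightarrow> real" where
  "Lam_plus I E = Lam I E * real (card I + card E + 1) / real (card E)"

end

theory Submission
  imports Defs
begin

lemma binom_real: "k \<le> n \<Longrightarrow> (fact k :: real) * fact (n - k) * real (n choose k) = fact n"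
  by (metis binomial_fact_lemma of_nat_fact of_nat_mult)

lemma hsum: "finite F \<Longrightarrow>
  (\<Sum>A\<in>Pow F. (fact (a + card A) :: real) * fact (b + card F - card A)) * fact (a+b+1)
   = fact a * fact b * fact (a + b + card F + 1)"
proof (induction F arbitrary: a b rule: finite_induct)
  case empty
  then show ?case by simp
next
  case (insert x F)
  let ?S = "\<lambda>a b. (\<Sum>A\<in>Pow F. (fact (a + card A) :: real) * fact (b + card F - card A))"
  have inj: "inj_on (insert x) (Pow F)"
    using insert.hyps by (smt (verit, ccfv_SIG) PowD inj_on_def insert_absorb insert_ident subset_iff)
  have cA: "A \<in> Pow F \<Longrightarrow> card (insert x A) = card A + 1" for A
    using insert.hyps by (metis PowD Suc_eq_plus1 card_insert_disjoint finite_subset subsetD)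
  have cle: "A \<in> Pow F \<Longrightarrow> card A \<le> card F" for A
    using insert.hyps by (simp add: card_mono)
  have "(\<Sum>A\<in>Pow (insert x F). (fact (a + card A) :: real) * fact (b + card (insert x F) - card A))
     = (\<Sum>A\<in>Pow F. (fact (a + card A) :: real) * fact (b + card (insert x F) - card A))
     + (\<Sum>A\<in>insert x ` Pow F. (fact (a + card A) :: real) * fact (b + card (insert x F) - card A))"
    unfolding Pow_insert
    by (rule sum.union_disjoint) (use insert.hyps in auto)
  also have "(\<Sum>A\<in>Pow F. (fact (a + card A) :: real) * fact (b + card (insert x F) - card A)) = ?S a (b+1)"
    using insert.hyps by (intro sum.cong) auto
  also have "(\<Sum>A\<in>insert x ` Pow F. (fact (a + card A) :: real) * fact (b + card (insert x F) - card A))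
     = ?S (a+1) b"
    by (subst sum.reindex[OF inj]) (use insert.hyps cA in \<open>auto intro!: sum.cong\<close>)
  finally have eq: "(\<Sum>A\<in>Pow (insert x F). (fact (a + card A) :: real) * fact (b + card (insert x F) - card A)) = ?S a (b+1) + ?S (a+1) b" .
  have i1: "?S a (b+1) * fact (a+b+2) = fact a * fact (b+1) * fact (a+b+card F+2)"
    using insert.IH[of a "b+1"] by (simp add: algebra_simps)
  have i2: "?S (a+1) b * fact (a+b+2) = fact (a+1) * fact b * fact (a+b+card F+2)"
    using insert.IH[of "a+1" b] by (simp add: algebra_simps)
  have fs: "fact (a+b+2) = (fact (a+b+1) :: real) * (a+b+2)"
    by (simp add: algebra_simps fact_Suc)
  have fs2: "fact (a+1) = (fact a :: real) * (a+1)" "fact (b+1) = (fact b :: real) * (b+1)"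
    by (simp_all add: algebra_simps fact_Suc)
  have "(?S a (b+1) + ?S (a+1) b) * fact (a+b+2) = (fact a :: real) * fact b * fact (a+b+card F+2) * (real a+real b+2)"
    using i1 i2 unfolding fs2 by (simp add: algebra_simps)
  then have "((?S a (b+1) + ?S (a+1) b) * fact (a+b+1)) * (real a+real b+2) = ((fact a :: real) * fact b * fact (a+b+card F+2)) * (real a+real b+2)"
    unfolding fs by (simp add: algebra_simps)
  moreover have "(real a+real b+2) \<noteq> 0" by simp
  ultimately have "(?S a (b+1) + ?S (a+1) b) * fact (a+b+1) = fact a * fact b * fact (a+b+card F+2)"
    by (meson mult_right_cancel)
  then show ?case using eq insert.hyps by simp
qed


lemma divh: "(X::real) * c = P * d \<Longrightarrow> c \<noteq> 0 \<Longrightarrow> d \<noteq> 0 \<Longrightarrow> X / d = P / c"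
  by (simp add: field_simps)

lemma sw: "k < N \<Longrightarrow> shap_weight N k = fact k * fact (N-1-k) / fact N"
proof -
  assume k: "k < N"
  define C where "C = real (N - 1 choose k)"
  define P where "P = (fact k :: real) * fact (N - 1 - k)"
  have b: "P * C = fact (N - 1)"
    using binom_real[of k "N-1"] k unfolding P_def C_def by simp
  have "fact N = real N * (fact (N-1) :: real)"
    using k by (metis Suc_diff_1 fact_Suc gr_implies_not_zero not_gr_zero of_nat_fact)
  then have f: "fact N = P * (real N * C)" unfolding b[symmetric] by (simp only: mult_ac)
  have nz: "P \<noteq> 0" unfolding P_def by simp
  have "shap_weight N k = 1 / (real N * C)" unfolding shap_weight_def C_def ..
  also have "\<dots> = P / (P * (real N * C))"
    using nonzero_divide_mult_cancel_left[OF nz, symmetric] by simp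
  finally show ?thesis using f unfolding P_def by (simp only:)
qed

lemma LamF: "Lam I E = fact (card I) * fact (card E) / fact (card I + card E + 1)"
proof -
  define C where "C = real ((card I + card E) choose card I)"
  have b: "(fact (card I) :: real) * fact (card E) * C = fact (card I + card E)"
    using binom_real[of "card I" "card I + card E"] unfolding C_def by simp
  have "fact (card I + card E + 1) = (fact (card I + card E) :: real) * real (card I + card E + 1)"
    by (simp add: fact_Suc algebra_simps)
  also have "\<dots> = (fact (card I) * fact (card E)) * (real (card I + card E + 1) * C)"
    unfolding b[symmetric] by (simp add: algebra_simps)
  finally have f: "fact (card I + card E + 1) = (fact (card I) * fact (card E)) * (real (card I + card E + 1) * C)" .
  have nz: "(fact (card I) * fact (card E) :: real) \<noteq> 0" by simp
  have "Lam I E = 1 / (real (card I + card E + 1) * C)" unfolding Lam_def C_def ..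
  also have "\<dots> = (fact (card I) * fact (card E)) / ((fact (card I) * fact (card E)) * (real (card I + card E + 1) * C))"
    using nonzero_divide_mult_cancel_left[OF nz, symmetric] by simp
  finally show ?thesis using f by (simp only:)
qed

lemma reidx:
  fixes I E :: "'n::finite set"
  assumes "I \<inter> E = {}"
  shows "(\<Sum>T\<in>branch I E. g (card T)) = (\<Sum>A\<in>Pow (-I-E). g (card I + card A))"
proof -
  have inj: "inj_on (\<lambda>A. I \<union> A) (Pow (-I-E))" unfolding inj_on_def by auto
  have img: "(\<lambda>A. I \<union> A) ` Pow (-I-E) = branch I E"
  proof
    show "(\<lambda>A. I \<union> A) ` Pow (-I-E) \<subseteq> branch I E" using assms unfolding branch_def by auto
    show "branch I E \<subseteq> (\<lambda>A. I \<union> A) ` Pow (-I-E)"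
    proof
      fix T assume "T \<in> branch I E"
      then have "T = I \<union> (T - I)" "T - I \<in> Pow (-I-E)" unfolding branch_def by auto
      then show "T \<in> (\<lambda>A. I \<union> A) ` Pow (-I-E)" by blast
    qed
  qed
  have "(\<Sum>T\<in>branch I E. g (card T)) = (\<Sum>A\<in>Pow (-I-E). g (card (I \<union> A)))"
    unfolding img[symmetric] by (subst sum.reindex[OF inj]) simp
  also have "\<dots> = (\<Sum>A\<in>Pow (-I-E). g (card I + card A))"
    by (intro sum.cong refl, subst card_Un_disjoint) auto
  finally show ?thesis .
qed

lemma cardU:
  fixes I E :: "'n::finite set"
  assumes "I \<inter> E = {}"
  shows "CARD('n) = card I + card E + card (-I-E)"
proof -
  have "UNIV = (I \<union> E) \<union> (-I-E)" by auto
  moreover have "card ((I \<union> E) \<union> (-I-E)) = card (I \<union> E) + card (-I-E)"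
    by (rule card_Un_disjoint) auto
  ultimately have "CARD('n) = card (I \<union> E) + card (-I-E)" by simp
  then show ?thesis using assms by (simp add: card_Un_disjoint)
qed

lemma WBp:
  fixes I E :: "'n::finite set"
  assumes d: "I \<inter> E = {}" and ne: "E \<noteq> {}"
  shows "(\<Sum>T\<in>branch I E. shap_weight CARD('n) (card T)) = fact (card I) * fact (card E - 1) / fact (card I + card E)"
proof -
  define F where "F = -I-E"
  define r where "r = card I"
  define e where "e = card E"
  define m where "m = card F"
  have N: "CARD('n) = r + e + m" using cardU[OF d] unfolding r_def e_def m_def F_def by simp
  have e1: "e \<ge> 1" using ne unfolding e_def by (simp add: Suc_leI card_gt_0_iff)
  have "(\<Sum>T\<in>branch I E. shap_weight CARD('n) (card T)) = (\<Sum>A\<in>Pow F. shap_weight CARD('n) (r + card A))"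
    unfolding reidx[OF d] F_def r_def ..
  also have "\<dots> = (\<Sum>A\<in>Pow F. (fact (r + card A) * fact ((e-1) + m - card A)) / fact (r+e+m))"
  proof (intro sum.cong refl)
    fix A assume "A \<in> Pow F"
    then have "card A \<le> m" unfolding m_def by (simp add: card_mono)
    then show "shap_weight CARD('n) (r + card A) = (fact (r + card A) * fact ((e-1) + m - card A)) / fact (r+e+m)"
    proof -
      assume cA: "card A \<le> m"
      have lt: "r + card A < r+e+m" using e1 cA by linarith
      have eqn: "r+e+m-1-(r+card A) = (e-1)+m-card A" using e1 cA by linarith
      show ?thesis unfolding N sw[OF lt] eqn ..
    qed
  qed
  also have "\<dots> = (\<Sum>A\<in>Pow F. (fact (r + card A) * fact ((e-1) + card F - card A))) / fact (r+e+m)"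
    unfolding m_def by (simp add: sum_divide_distrib)
  also have "\<dots> = fact r * fact (e-1) / fact (r+e)"
  proof -
    have h: "(\<Sum>A\<in>Pow F. ((fact (r + card A) * fact ((e-1) + card F - card A)) :: real)) * fact (r+e) = fact r * fact (e-1) * fact (r+e+m)"
    proof -
      have q1: "r + (e-1) + 1 = r + e" "r + (e-1) + card F + 1 = r+e+m" using e1 unfolding m_def by linarith+
      show ?thesis by (rule hsum[of F r "e-1", unfolded q1]) (simp add: F_def)
    qed
    show ?thesis by (rule divh[OF h]) simp_all
  qed
  finally show ?thesis unfolding r_def e_def .
qed

lemma WAp:
  fixes I E :: "'n::finite set"
  assumes d: "I \<inter> E = {}" and ne: "I \<noteq> {}"
  shows "(\<Sum>T\<in>branch I E. shap_weight CARD('n) (card T - 1)) = fact (card I - 1) * fact (card E) / fact (card I + card E)"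
proof -
  define F where "F = -I-E"
  define r where "r = card I"
  define e where "e = card E"
  define m where "m = card F"
  have N: "CARD('n) = r + e + m" using cardU[OF d] unfolding r_def e_def m_def F_def by simp
  have r1: "r \<ge> 1" using ne unfolding r_def by (simp add: Suc_leI card_gt_0_iff)
  have "(\<Sum>T\<in>branch I E. shap_weight CARD('n) (card T - 1)) = (\<Sum>A\<in>Pow F. shap_weight CARD('n) (r + card A - 1))"
    using reidx[OF d, of "\<lambda>c. shap_weight CARD('n) (c - 1)"] unfolding F_def r_def by simp
  also have "\<dots> = (\<Sum>A\<in>Pow F. (fact ((r-1) + card A) * fact (e + m - card A)) / fact (r+e+m))"
  proof (intro sum.cong refl)
    fix A assume "A \<in> Pow F"
    then have "card A \<le> m" unfolding m_def by (simp add: card_mono)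
    then show "shap_weight CARD('n) (r + card A - 1) = (fact ((r-1) + card A) * fact (e + m - card A)) / fact (r+e+m)"
    proof -
      assume cA: "card A \<le> m"
      have lt: "(r-1) + card A < r+e+m" using r1 cA by linarith
      have eqn: "r+e+m-1-((r-1)+card A) = e+m-card A" using r1 cA by linarith
      have eqm: "r + card A - 1 = (r-1) + card A" using r1 by linarith
      show ?thesis unfolding N eqm sw[OF lt] eqn ..
    qed
  qed
  also have "\<dots> = (\<Sum>A\<in>Pow F. (fact ((r-1) + card A) * fact (e + card F - card A))) / fact (r+e+m)"
    unfolding m_def by (simp add: sum_divide_distrib)
  also have "\<dots> = fact (r-1) * fact e / fact (r+e)"
  proof -
    have h: "(\<Sum>A\<in>Pow F. ((fact ((r-1) + card A) * fact (e + card F - card A)) :: real)) * fact (r+e) = fact (r-1) * fact e * fact (r+e+m)"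
    proof -
      have q1: "r - 1 + e + 1 = r + e" "r - 1 + e + card F + 1 = r+e+m" using r1 unfolding m_def by linarith+
      show ?thesis by (rule hsum[of F "r-1" e, unfolded q1]) (simp add: F_def)
    qed
    show ?thesis by (rule divh[OF h]) simp_all
  qed
  finally show ?thesis unfolding r_def e_def .
qed


lemma alg1: "(r::real) \<noteq> 0 \<Longrightarrow> s \<noteq> 0 \<Longrightarrow> r * a * b / (s * c) * s / r = a * b / c"
  by (simp add: field_simps)
lemma alg2: "(r::real) \<noteq> 0 \<Longrightarrow> s \<noteq> 0 \<Longrightarrow> b * (r * a) / (s * c) * s / r = b * a / c"
  by (simp add: field_simps)

lemma LamM: "card I \<ge> 1 \<Longrightarrow> Lam_minus I E = fact (card I - 1) * fact (card E) / fact (card I + card E)"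
proof -
  assume r: "card I \<ge> 1"
  have f1: "fact (card I) = real (card I) * (fact (card I - 1) :: real)"
    using r by (simp add: fact_reduce)
  have f2: "fact (card I + card E + 1) = real (card I + card E + 1) * (fact (card I + card E) :: real)"
    by (simp add: algebra_simps)
  have nz: "real (card I) \<noteq> 0" "real (card I + card E + 1) \<noteq> 0" using r by auto
  show ?thesis unfolding Lam_minus_def LamF f1 f2 by (rule alg1) (use nz in auto)
qed

lemma LamP: "card E \<ge> 1 \<Longrightarrow> Lam_plus I E = fact (card I) * fact (card E - 1) / fact (card I + card E)"
proof -
  assume r: "card E \<ge> 1"
  have f1: "fact (card E) = real (card E) * (fact (card E - 1) :: real)"
    using r by (simp add: fact_reduce)
  have f2: "fact (card I + card E + 1) = real (card I + card E + 1) * (fact (card I + card E) :: real)"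
    by (simp add: algebra_simps)
  have nz: "real (card E) \<noteq> 0" "real (card I + card E + 1) \<noteq> 0" using r by auto
  show ?thesis unfolding Lam_plus_def LamF f1 f2 by (rule alg2) (use nz in auto)
qed

lemma wsum_bounds:
  fixes w g :: "'a \<Rightarrow> real"
  assumes "\<forall>a\<in>A. 0 \<le> w a" "\<forall>a\<in>A. l \<le> g a \<and> g a \<le> u"
  shows "(\<Sum>a\<in>A. w a) * l \<le> (\<Sum>a\<in>A. w a * g a) \<and> (\<Sum>a\<in>A. w a * g a) \<le> (\<Sum>a\<in>A. w a) * u"
proof
  show "(\<Sum>a\<in>A. w a) * l \<le> (\<Sum>a\<in>A. w a * g a)"
    unfolding sum_distrib_right by (rule sum_mono) (use assms in \<open>auto intro: mult_left_mono\<close>)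
  show "(\<Sum>a\<in>A. w a * g a) \<le> (\<Sum>a\<in>A. w a) * u"
    unfolding sum_distrib_right by (rule sum_mono) (use assms in \<open>auto intro: mult_left_mono\<close>)
qed

lemma sw_nonneg: "0 \<le> shap_weight N k"
  unfolding shap_weight_def by simp

lemma part_sum:
  fixes B :: "('n::finite set \<times> 'n set) set"
  assumes part: "\<forall>S. \<exists>!p\<in>B. S \<in> branch (fst p) (snd p)"
  shows "(\<Sum>T\<in>X. g T) = (\<Sum>p\<in>B. \<Sum>T\<in>branch (fst p) (snd p) \<inter> X. g T)"
proof -
  have finB: "finite B" by (rule finite_subset[OF subset_UNIV]) simp
  have X: "X = (\<Union>p\<in>B. branch (fst p) (snd p) \<inter> X)" using part by blast
  have "(\<Sum>T\<in>(\<Union>p\<in>B. branch (fst p) (snd p) \<inter> X). g T) = (\<Sum>p\<in>B. \<Sum>T\<in>branch (fst p) (snd p) \<inter> X. g T)"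
  proof (rule sum.UNION_disjoint[OF finB])
    show "\<forall>p\<in>B. finite (branch (fst p) (snd p) \<inter> X)" by simp
    show "\<forall>p\<in>B. \<forall>q\<in>B. p \<noteq> q \<longrightarrow> (branch (fst p) (snd p) \<inter> X) \<inter> (branch (fst q) (snd q) \<inter> X) = {}"
      using part by blast
  qed
  then show ?thesis using X by simp
qed

theorem mainTheorem7:
  fixes f :: "real^'n::finite \<Rightarrow> real" and x :: "real^'n" and D :: "(real^'n) measure"
    and B :: "('n set \<times> 'n set) set"
    and lo hi :: "'n set \<times> 'n set \<Rightarrow> real"
    and i :: 'n
  assumes "prob_space D" and "sets D = sets borel"
    and disj: "\<forall>(I, E) \<in> B. I \<inter> E = {}"
    and part: "\<forall>S :: 'n set. \<exists>!p \<in> B. S \<in> branch (fst p) (snd p)"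
    and lohi: "\<forall>p \<in> B. lo p \<le> hi p"
    and bounds: "\<forall>p \<in> B. \<forall>S \<in> branch (fst p) (snd p).
                   lo p \<le> game_val f x D S \<and> game_val f x D S \<le> hi p"
  shows
   "(\<Sum>(I, E) \<in> {(I, E) \<in> B. i \<in> I}. Lam_minus I E * lo (I, E))
    + (\<Sum>(I, E) \<in> {(I, E) \<in> B. i \<notin> I \<and> i \<notin> E}. Lam I E * (lo (I, E) - hi (I, E)))
    - (\<Sum>(I, E) \<in> {(I, E) \<in> B. i \<in> E}. Lam_plus I E * hi (I, E))
    \<le> shapley (game_val f x D) i
   \<and> shapley (game_val f x D) i \<le>
     (\<Sum>(I, E) \<in> {(I, E) \<in> B. i \<in> I}. Lam_minus I E * hi (I, E))
    + (\<Sum>(I, E) \<in> {(I, E) \<in> B. i \<notin> I \<and> i \<notin> E}. Lam I E * (hi (I, E) - lo (I, E)))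
    - (\<Sum>(I, E) \<in> {(I, E) \<in> B. i \<in> E}. Lam_plus I E * lo (I, E))"
proof -
  define v where "v = game_val f x D"
  define w where "w = shap_weight CARD('n)"
  define br where "br = (\<lambda>p::'n set \<times> 'n set. branch (fst p) (snd p))"
  define c where "c = (\<lambda>p. (\<Sum>T\<in>br p \<inter> {T. i \<in> T}. w (card T - 1) * v T) - (\<Sum>S\<in>br p \<inter> {S. i \<notin> S}. w (card S) * v S))"
  define L where "L = (\<lambda>p. if i \<in> fst p then Lam_minus (fst p) (snd p) * lo p else if i \<in> snd p then - (Lam_plus (fst p) (snd p) * hi p) else Lam (fst p) (snd p) * (lo p - hi p))"
  define U where "U = (\<lambda>p. if i \<in> fst p then Lam_minus (fst p) (snd p) * hi p else if i \<in> snd p then - (Lam_plus (fst p) (snd p) * lo p) else Lam (fst p) (snd p) * (hi p - lo p))"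
  have finB: "finite B" by (rule finite_subset[OF subset_UNIV]) simp
  have wnn: "0 \<le> w k" for k unfolding w_def by (rule sw_nonneg)
  have sh: "shapley v i = (\<Sum>p\<in>B. c p)"
  proof -
    have S1: "{S. S \<subseteq> UNIV - {i}} = {S. i \<notin> S}" by auto
    have inj: "inj_on (insert i) {S. i \<notin> S}" by (rule inj_onI) (metis Diff_insert_absorb mem_Collect_eq)
    have img: "insert i ` {S. i \<notin> S} = {T. i \<in> T}"
    proof
      show "insert i ` {S. i \<notin> S} \<subseteq> {T. i \<in> T}" by auto
      show "{T. i \<in> T} \<subseteq> insert i ` {S. i \<notin> S}"
      proof
        fix T assume "T \<in> {T. i \<in> T}"
        then have "T = insert i (T - {i})" by auto
        then show "T \<in> insert i ` {S. i \<notin> S}" by blast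
      qed
    qed
    have "shapley v i = (\<Sum>S\<in>{S. i \<notin> S}. w (card S) * v (insert i S)) - (\<Sum>S\<in>{S. i \<notin> S}. w (card S) * v S)"
      unfolding shapley_def S1 w_def by (simp add: sum_subtractf right_diff_distrib)
    also have "(\<Sum>S\<in>{S. i \<notin> S}. w (card S) * v (insert i S)) = (\<Sum>T\<in>{T. i \<in> T}. w (card T - 1) * v T)"
    proof -
      have "(\<Sum>T\<in>{T. i \<in> T}. w (card T - 1) * v T) = (\<Sum>S\<in>{S. i \<notin> S}. w (card (insert i S) - 1) * v (insert i S))"
        unfolding img[symmetric] by (subst sum.reindex[OF inj]) simp
      also have "\<dots> = (\<Sum>S\<in>{S. i \<notin> S}. w (card S) * v (insert i S))"
        by (intro sum.cong refl) simp
      finally show ?thesis by simp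
    qed
    also have "(\<Sum>T\<in>{T. i \<in> T}. w (card T - 1) * v T) = (\<Sum>p\<in>B. \<Sum>T\<in>br p \<inter> {T. i \<in> T}. w (card T - 1) * v T)"
      unfolding br_def by (rule part_sum[OF part])
    also have "(\<Sum>S\<in>{S. i \<notin> S}. w (card S) * v S) = (\<Sum>p\<in>B. \<Sum>S\<in>br p \<inter> {S. i \<notin> S}. w (card S) * v S)"
      unfolding br_def by (rule part_sum[OF part])
    finally show ?thesis unfolding c_def by (simp add: sum_subtractf)
  qed
  have pb: "L p \<le> c p \<and> c p \<le> U p" if pB: "p \<in> B" for p
  proof -
    obtain I E where pIE: "p = (I, E)" by (cases p)
    have d: "I \<inter> E = {}" using disj pB pIE by auto
    have bd: "\<forall>S\<in>br p. lo p \<le> v S \<and> v S \<le> hi p" using bounds pB unfolding v_def br_def by blast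
    have brp: "br p = branch I E" unfolding br_def pIE by simp
    show ?thesis
    proof (cases "i \<in> I")
      case True
      have e1: "br p \<inter> {T. i \<in> T} = br p" using True unfolding brp branch_def by auto
      have e2: "br p \<inter> {S. i \<notin> S} = {}" using True unfolding brp branch_def by auto
      have cp: "c p = (\<Sum>T\<in>br p. w (card T - 1) * v T)" unfolding c_def e1 e2 by simp
      have ws: "(\<Sum>T\<in>br p. w (card T - 1)) = Lam_minus I E"
      proof -
        have r1: "card I \<ge> 1" using True by (metis One_nat_def Suc_leI card_gt_0_iff empty_iff finite)
        have ne: "I \<noteq> {}" using True by auto
        show ?thesis unfolding brp w_def WAp[OF d ne] LamM[OF r1] ..
      qed
      have "(\<Sum>T\<in>br p. w (card T - 1)) * lo p \<le> (\<Sum>T\<in>br p. w (card T - 1) * v T) \<and> (\<Sum>T\<in>br p. w (card T - 1) * v T) \<le> (\<Sum>T\<in>br p. w (card T - 1)) * hi p"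
        by (rule wsum_bounds) (use wnn bd in auto)
      then show ?thesis unfolding cp ws L_def U_def using True pIE by simp
    next
      case nI: False
      show ?thesis
      proof (cases "i \<in> E")
        case True
        have e1: "br p \<inter> {T. i \<in> T} = {}" using True unfolding brp branch_def by auto
        have e2: "br p \<inter> {S. i \<notin> S} = br p" using True unfolding brp branch_def by auto
        have cp: "c p = - (\<Sum>T\<in>br p. w (card T) * v T)" unfolding c_def e1 e2 by simp
        have ws: "(\<Sum>T\<in>br p. w (card T)) = Lam_plus I E"
        proof -
          have r1: "card E \<ge> 1" using True by (metis One_nat_def Suc_leI card_gt_0_iff empty_iff finite)
          have ne: "E \<noteq> {}" using True by auto
          show ?thesis unfolding brp w_def WBp[OF d ne] LamP[OF r1] ..
        qed
        have "(\<Sum>T\<in>br p. w (card T)) * lo p \<le> (\<Sum>T\<in>br p. w (card T) * v T) \<and> (\<Sum>T\<in>br p. w (card T) * v T) \<le> (\<Sum>T\<in>br p. w (card T)) * hi p"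
          by (rule wsum_bounds) (use wnn bd in auto)
        then show ?thesis unfolding cp ws L_def U_def using True nI pIE by simp
      next
        case nE: False
        define br' where "br' = branch I (insert i E)"
        have d': "I \<inter> insert i E = {}" using d nI by auto
        have e2: "br p \<inter> {S. i \<notin> S} = br'" unfolding brp br'_def branch_def by auto
        have nib: "\<And>S. S \<in> br' \<Longrightarrow> i \<notin> S" unfolding br'_def branch_def by auto
        have inj: "inj_on (insert i) br'" by (rule inj_onI) (metis Diff_insert_absorb nib)
        have img: "insert i ` br' = br p \<inter> {T. i \<in> T}"
        proof
          show "insert i ` br' \<subseteq> br p \<inter> {T. i \<in> T}" using nE unfolding br'_def brp branch_def by auto
          show "br p \<inter> {T. i \<in> T} \<subseteq> insert i ` br'"
          proof
            fix T assume T: "T \<in> br p \<inter> {T. i \<in> T}"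
            then have "T = insert i (T - {i})" "T - {i} \<in> br'" using nI unfolding brp br'_def branch_def by auto
            then show "T \<in> insert i ` br'" by blast
          qed
        qed
        have "(\<Sum>T\<in>br p \<inter> {T. i \<in> T}. w (card T - 1) * v T) = (\<Sum>S\<in>br'. w (card (insert i S) - 1) * v (insert i S))"
          unfolding img[symmetric] by (subst sum.reindex[OF inj]) simp
        also have "\<dots> = (\<Sum>S\<in>br'. w (card S) * v (insert i S))"
          by (intro sum.cong refl) (simp add: br'_def branch_def)
        finally have cp: "c p = (\<Sum>S\<in>br'. w (card S) * (v (insert i S) - v S))"
          unfolding c_def e2 by (simp add: sum_subtractf right_diff_distrib)
        have ws: "(\<Sum>S\<in>br'. w (card S)) = Lam I E"
        proof -
          have ci: "card (insert i E) = card E + 1" using nE by simp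
          have ne: "insert i E \<noteq> {}" by simp
          show ?thesis unfolding br'_def w_def WBp[OF d' ne] LamF ci by (simp add: algebra_simps)
        qed
        have bd': "\<forall>S\<in>br'. lo p - hi p \<le> v (insert i S) - v S \<and> v (insert i S) - v S \<le> hi p - lo p"
        proof
          fix S assume S: "S \<in> br'"
          then have "S \<in> br p" "insert i S \<in> br p" using nE unfolding br'_def brp branch_def by auto
          then show "lo p - hi p \<le> v (insert i S) - v S \<and> v (insert i S) - v S \<le> hi p - lo p"
          proof -
            assume a1: "S \<in> br p" and a2: "insert i S \<in> br p"
            have "lo p \<le> v S" "v S \<le> hi p" using bd a1 by auto
            moreover have "lo p \<le> v (insert i S)" "v (insert i S) \<le> hi p" using bd a2 by auto
            ultimately show ?thesis by linarith
          qed
        qed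
        have "(\<Sum>S\<in>br'. w (card S)) * (lo p - hi p) \<le> (\<Sum>S\<in>br'. w (card S) * (v (insert i S) - v S)) \<and> (\<Sum>S\<in>br'. w (card S) * (v (insert i S) - v S)) \<le> (\<Sum>S\<in>br'. w (card S)) * (hi p - lo p)"
          by (rule wsum_bounds) (use wnn bd' in auto)
        then show ?thesis unfolding cp ws L_def U_def using nE nI pIE by (simp add: mult.commute)
      qed
    qed
  qed
  have low: "(\<Sum>p\<in>B. L p) \<le> shapley v i" unfolding sh by (rule sum_mono) (use pb in auto)
  have upp: "shapley v i \<le> (\<Sum>p\<in>B. U p)" unfolding sh by (rule sum_mono) (use pb in auto)
  have s1: "B \<inter> {p. i \<in> fst p} = {(I, E) \<in> B. i \<in> I}" by auto
  have s2: "B \<inter> - {p. i \<in> fst p} \<inter> {p. i \<in> snd p} = {(I, E) \<in> B. i \<in> E}" using disj by fastforce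
  have s3: "B \<inter> - {p. i \<in> fst p} \<inter> - {p. i \<in> snd p} = {(I, E) \<in> B. i \<notin> I \<and> i \<notin> E}" by auto
  have split: "(\<Sum>p\<in>B. if i \<in> fst p then g1 p else if i \<in> snd p then g2 p else g3 p)
     = (\<Sum>p\<in>{(I, E) \<in> B. i \<in> I}. g1 p) + (\<Sum>p\<in>{(I, E) \<in> B. i \<notin> I \<and> i \<notin> E}. g3 p) + (\<Sum>p\<in>{(I, E) \<in> B. i \<in> E}. g2 p)"
    for g1 g2 g3 :: "'n set \<times> 'n set \<Rightarrow> real"
  proof -
    have "(\<Sum>p\<in>B. if i \<in> fst p then g1 p else if i \<in> snd p then g2 p else g3 p)
      = (\<Sum>p\<in>B \<inter> {p. i \<in> fst p}. g1 p) + (\<Sum>p\<in>B \<inter> - {p. i \<in> fst p}. if i \<in> snd p then g2 p else g3 p)"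
      by (rule sum.If_cases[OF finB])
    also have "(\<Sum>p\<in>B \<inter> - {p. i \<in> fst p}. if i \<in> snd p then g2 p else g3 p)
      = (\<Sum>p\<in>B \<inter> - {p. i \<in> fst p} \<inter> {p. i \<in> snd p}. g2 p) + (\<Sum>p\<in>B \<inter> - {p. i \<in> fst p} \<inter> - {p. i \<in> snd p}. g3 p)"
      by (rule sum.If_cases) (use finB in simp)
    finally show ?thesis unfolding s1 s2 s3 by simp
  qed
  have Lsum: "(\<Sum>p\<in>B. L p) =
     (\<Sum>(I, E) \<in> {(I, E) \<in> B. i \<in> I}. Lam_minus I E * lo (I, E))
    + (\<Sum>(I, E) \<in> {(I, E) \<in> B. i \<notin> I \<and> i \<notin> E}. Lam I E * (lo (I, E) - hi (I, E)))
    - (\<Sum>(I, E) \<in> {(I, E) \<in> B. i \<in> E}. Lam_plus I E * hi (I, E))"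
    unfolding L_def split by (simp add: case_prod_beta sum_negf)
  have Usum: "(\<Sum>p\<in>B. U p) =
     (\<Sum>(I, E) \<in> {(I, E) \<in> B. i \<in> I}. Lam_minus I E * hi (I, E))
    + (\<Sum>(I, E) \<in> {(I, E) \<in> B. i \<notin> I \<and> i \<notin> E}. Lam I E * (hi (I, E) - lo (I, E)))
    - (\<Sum>(I, E) \<in> {(I, E) \<in> B. i \<in> E}. Lam_plus I E * lo (I, E))"
    unfolding U_def split by (simp add: case_prod_beta sum_negf)
  show ?thesis using low upp unfolding Lsum Usum v_def by simp
qed

end
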